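(* Let $R$ be a finite commutative Frobenius ring of characteristic $2$, let $G=\{g_1,\dots,g_n\}$ be a finite abelian group of order $n$ with a fixed listing of its elements, let $v_1\neq v_2$ be elements of $RG$, and let $A$ be an $n\times n$ reverse circulant matrix over $R$. Let $C_\sigma$ be the code over $R$ generated by $$M(\sigma)=\left(\, I_{2n} \;\middle|\; \begin{matrix} \sigma(v_1) & \sigma(v_2)+A\\ \sigma(v_2)+A & \sigma(v_1)\end{matrix}\,\right).$$ If $C_\sigma$ is self-dual and $A=0$, then $v_1+v_2$ is a unitary unit of $RG$, i.e. $(v_1+v_2)(v_1+v_2)^*=1$.
   Context: For $v=\sum_{g\in G}\alpha_g g\in RG$, $\sigma(v)$ is the $n\times n$ matrix over $R$ whose $(i,j)$ entry is $\alpha_{g_i^{-1}g_j}$, and $v^*=\sum_g\alpha_g g^{-1}$. An $n\times n$ matrix $(a_{ij})$ is reverse circulant if $a_{ij}$ depends only on $(i+j)\bmod n$. The code generated by a matrix is the $R$-submodule spanned by its rows; it is self-dual if it equals its dual with respect to the Euclidean inner product $\langle x,y\rangle=\sum_i x_iy_i$. *)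

theory Defs
  imports Complex_Main
begin

definition is_ideal :: "'r::comm_ring_1 set \<Rightarrow> bool" where
  "is_ideal I \<longleftrightarrow> 0 \<in> I \<and> (\<forall>a\<in>I. \<forall>b\<in>I. a + b \<in> I) \<and> (\<forall>a\<in>I. -a \<in> I)
     \<and> (\<forall>r. \<forall>a\<in>I. r * a \<in> I)"

definition additive_character :: "('r::comm_ring_1 \<Rightarrow> complex) \<Rightarrow> bool" where
  "additive_character \<chi> \<longleftrightarrow> (\<forall>a. \<chi> a \<noteq> 0) \<and> (\<forall>a b. \<chi> (a + b) = \<chi> a * \<chi> b)"

(* A finite commutative ring is Frobenius iff it admits a generating character:
   a character whose kernel contains no nonzero ideal. *)
definition frobenius_ring :: "'r::{comm_ring_1,finite} itself \<Rightarrow> bool" where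
  "frobenius_ring _ \<longleftrightarrow> (\<exists>\<chi> :: 'r \<Rightarrow> complex. additive_character \<chi> \<and>
      (\<forall>I. is_ideal I \<and> (\<forall>a\<in>I. \<chi> a = 1) \<longrightarrow> I = {0}))"

(* Group ring RG over a finite abelian group G (written additively):
   elements are functions G \<Rightarrow> R, v = \<Sum>_g v(g) g. *)
definition gr_mult :: "('g::{ab_group_add,finite} \<Rightarrow> 'r::comm_ring_1) \<Rightarrow> ('g \<Rightarrow> 'r) \<Rightarrow> ('g \<Rightarrow> 'r)" where
  "gr_mult v w = (\<lambda>h. \<Sum>k\<in>UNIV. v k * w (h - k))"

definition gr_one :: "'g::{ab_group_add,finite} \<Rightarrow> 'r::comm_ring_1" where
  "gr_one = (\<lambda>h. if h = 0 then 1 else 0)"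

definition gr_add :: "('g \<Rightarrow> 'r::comm_ring_1) \<Rightarrow> ('g \<Rightarrow> 'r) \<Rightarrow> ('g \<Rightarrow> 'r)" where
  "gr_add v w = (\<lambda>h. v h + w h)"

definition gr_star :: "('g::ab_group_add \<Rightarrow> 'r) \<Rightarrow> ('g \<Rightarrow> 'r)" where
  "gr_star v = (\<lambda>h. v (- h))"

(* \<sigma>(v)_{ij} = v(g_i^{-1} g_j), for the listing g : {0..<n} \<rightarrow> G; matrices are nat \<Rightarrow> nat \<Rightarrow> 'r, 0-indexed *)
definition sigma_mat :: "(nat \<Rightarrow> 'g::ab_group_add) \<Rightarrow> ('g \<Rightarrow> 'r) \<Rightarrow> nat \<Rightarrow> nat \<Rightarrow> 'r" where
  "sigma_mat g v = (\<lambda>i j. v (- g i + g j))"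

definition reverse_circulant :: "nat \<Rightarrow> (nat \<Rightarrow> nat \<Rightarrow> 'r) \<Rightarrow> bool" where
  "reverse_circulant n A \<longleftrightarrow> (\<forall>i<n. \<forall>j<n. \<forall>k<n. \<forall>l<n. (i + j) mod n = (k + l) mod n \<longrightarrow> A i j = A k l)"

(* The 2n \<times> 4n generator matrix ( I_{2n} | [[B1, B2],[B2, B1]] ) with B1 = \<sigma>(v1), B2 = \<sigma>(v2)+A *)
definition M_sigma :: "nat \<Rightarrow> (nat \<Rightarrow> 'g::ab_group_add) \<Rightarrow> ('g \<Rightarrow> 'r::comm_ring_1) \<Rightarrow> ('g \<Rightarrow> 'r)
    \<Rightarrow> (nat \<Rightarrow> nat \<Rightarrow> 'r) \<Rightarrow> nat \<Rightarrow> nat \<Rightarrow> 'r" where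
  "M_sigma n g v1 v2 A = (\<lambda>i k.
     let B1 = sigma_mat g v1; B2 = (\<lambda>a b. sigma_mat g v2 a b + A a b) in
     if k < 2 * n then (if i = k then 1 else 0)
     else let l = k - 2 * n in
       if i < n then (if l < n then B1 i l else B2 i (l - n))
       else (if l < n then B2 (i - n) l else B1 (i - n) (l - n)))"

(* Vectors of length N are functions nat \<Rightarrow> 'r vanishing at indices \<ge> N.
   The code generated by an m \<times> N matrix is the R-span of its rows. *)
definition code_gen :: "nat \<Rightarrow> nat \<Rightarrow> (nat \<Rightarrow> nat \<Rightarrow> 'r::comm_ring_1) \<Rightarrow> (nat \<Rightarrow> 'r) set" where
  "code_gen m N M = {x. \<exists>c. \<forall>k. x k = (if k < N then (\<Sum>i<m. c i * M i k) else 0)}"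

definition dual_code :: "nat \<Rightarrow> (nat \<Rightarrow> 'r::comm_ring_1) set \<Rightarrow> (nat \<Rightarrow> 'r) set" where
  "dual_code N C = {y. (\<forall>k\<ge>N. y k = 0) \<and> (\<forall>x\<in>C. (\<Sum>k<N. x k * y k) = 0)}"

definition self_dual :: "nat \<Rightarrow> (nat \<Rightarrow> 'r::comm_ring_1) set \<Rightarrow> bool" where
  "self_dual N C \<longleftrightarrow> C = dual_code N C"

end

theory Submission
  imports Defs
begin

lemma sum_split_add: "(\<Sum>k<a+(b::nat). f k) = (\<Sum>k<a. f k) + (\<Sum>l<b. (f (a+l)::'a::comm_monoid_add))"
  by (induction b arbitrary: f) (simp_all add: add.assoc)

lemma sum_listing:
  fixes g :: "nat \<Rightarrow> 'g::finite"
  assumes "bij_betw g {0..<n} (UNIV :: 'g set)"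
  shows "(\<Sum>l<n. (\<phi> (g l) :: 'r::comm_monoid_add)) = (\<Sum>x\<in>UNIV. \<phi> x)"
  using sum.reindex_bij_betw[OF assms, of \<phi>] by (simp add: atLeast0LessThan)

theorem mainTheorem8:
  fixes g :: "nat \<Rightarrow> 'g::{ab_group_add,finite}"
    and v1 v2 :: "'g \<Rightarrow> 'r::{comm_ring_1,finite}"
    and A :: "nat \<Rightarrow> nat \<Rightarrow> 'r"
    and n :: nat
  assumes frob: "frobenius_ring TYPE('r)"
    and char2: "CHAR('r) = 2"
    and n_def: "n = card (UNIV :: 'g set)"
    and listing: "bij_betw g {0..<n} (UNIV :: 'g set)"
    and neq: "v1 \<noteq> v2"
    and revcirc: "reverse_circulant n A"
    and selfdual: "self_dual (4 * n) (code_gen (2 * n) (4 * n) (M_sigma n g v1 v2 A))"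
    and A0: "\<forall>i<n. \<forall>j<n. A i j = 0"
  shows "gr_mult (gr_add v1 v2) (gr_star (gr_add v1 v2)) = gr_one"
proof -
  define M where "M = M_sigma n g v1 v2 A"
  define C where "C = code_gen (2 * n) (4 * n) M"
  have rowC: "(\<lambda>k. if k < 4*n then M r k else 0) \<in> C" if "r < 2*n" for r
  proof -
    have "(\<Sum>i<2*n. (if i = r then 1 else 0) * M i k) = M r k" for k
    proof -
      have "(\<Sum>i<2*n. (if i = r then 1 else 0) * M i k) = (\<Sum>i<2*n. if i = r then M r k else 0)"
        by (rule sum.cong) auto
      then show ?thesis using that by simp
    qed
    then show ?thesis unfolding C_def code_gen_def
      by (intro CollectI exI[of _ "\<lambda>i. if i = r then 1 else 0"]) simp
  qed
  have orth: "(\<Sum>k<4*n. M s k * M r k) = 0" if "s < 2*n" "r < 2*n" for s r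
  proof -
    have "(\<lambda>k. if k < 4*n then M r k else 0) \<in> dual_code (4*n) C"
      using selfdual rowC[OF that(2)] unfolding self_dual_def C_def M_def by simp
    then have H: "\<forall>x\<in>C. (\<Sum>k<4*n. x k * (if k < 4*n then M r k else 0)) = 0"
      unfolding dual_code_def by simp
    have "(\<Sum>k<4*n. (if k < 4*n then M s k else 0) * (if k < 4*n then M r k else 0)) = 0"
      using bspec[OF H rowC[OF that(1)]] by simp
    then show ?thesis by simp
  qed
  have split: "(\<Sum>k<4*n. f k) = (\<Sum>k<2*n. f k) + (\<Sum>l<n. f (2*n+l)) + (\<Sum>l<n. f (2*n+(n+l)))"
    for f :: "nat \<Rightarrow> 'r"
  proof -
    have "4*n = 2*n + (n+n)" by simp
    then show ?thesis by (simp only: sum_split_add) (simp add: add.assoc)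
  qed
  have M1: "M s k = (if s = k then 1 else 0)" if "k < 2*n" for s k
    using that unfolding M_def M_sigma_def by simp
  have M2: "M s (2*n+l) = v1 (- g s + g l)" "M s (2*n+(n+l)) = v2 (- g s + g l)"
    "M (n+s) (2*n+l) = v2 (- g s + g l)" "M (n+s) (2*n+(n+l)) = v1 (- g s + g l)"
    if "s < n" "l < n" for s l
    using that A0 unfolding M_def M_sigma_def sigma_mat_def by (simp_all add: Let_def)
  have one2: "(1::'r) + 1 = 0"
  proof -
    have "of_nat CHAR('r) = (0::'r)" by (rule of_nat_CHAR)
    then show ?thesis using char2 by simp
  qed
  have neg: "- (x::'r) = x" for x
  proof -
    have "x + x = 0" using one2 by (metis distrib_left mult.right_neutral mult_zero_right)
    then show ?thesis by (simp add: eq_neg_iff_add_eq_0)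
  qed
  show ?thesis
  proof
    fix h
    have surj: "\<exists>i<n. g i = y" for y
    proof -
      have "y \<in> g ` {0..<n}" using listing unfolding bij_betw_def by simp
      then show ?thesis by auto
    qed
    obtain i where i: "i < n" "g i = 0" using surj by blast
    obtain j where j: "j < n" "g j = h" using surj by blast
    have ij: "(i = j) = (h = 0)"
      using listing i j unfolding bij_betw_def inj_on_def by force
    have e1: "(\<Sum>k<4*n. M i k * M j k) = 0" using orth i j by simp
    have e2: "(\<Sum>k<4*n. M i k * M (n+j) k) = 0" using orth i j by simp
    have d1: "(\<Sum>k<2*n. M i k * M j k) = (if i = j then 1 else 0)"
    proof -
      have "(\<Sum>k<2*n. M i k * M j k) = (\<Sum>k<2*n. if k = i then (if i = j then 1 else 0) else 0)"
        by (rule sum.cong) (auto simp: M1)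
      then show ?thesis using i by simp
    qed
    have d2: "(\<Sum>k<2*n. M i k * M (n+j) k) = 0"
    proof -
      have "(\<Sum>k<2*n. M i k * M (n+j) k) = (\<Sum>k<2*n. 0)"
        by (rule sum.cong) (use i in \<open>auto simp: M1\<close>)
      then show ?thesis by simp
    qed
    let ?F = "\<lambda>a b. (\<Sum>x\<in>UNIV. a x * b (x - h))"
    have s: "(\<Sum>l<n. a (- g i + g l) * b (- g j + g l)) = ?F a b" for a b :: "'g \<Rightarrow> 'r"
      using sum_listing[OF listing, of "\<lambda>x. a (- g i + x) * b (- g j + x)"] i j by simp
    have P: "(\<Sum>l<n. M i (2*n+l) * M j (2*n+l)) = ?F v1 v1"
      "(\<Sum>l<n. M i (2*n+(n+l)) * M j (2*n+(n+l))) = ?F v2 v2"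
      "(\<Sum>l<n. M i (2*n+l) * M (n+j) (2*n+l)) = ?F v1 v2"
      "(\<Sum>l<n. M i (2*n+(n+l)) * M (n+j) (2*n+(n+l))) = ?F v2 v1"
      by (subst s[symmetric], rule sum.cong, rule refl, simp only: M2 i(1) j(1) lessThan_iff)+
    have E1: "(if h = 0 then 1 else 0) + ?F v1 v1 + ?F v2 v2 = 0"
      using e1 unfolding split d1 ij P .
    have E2: "?F v1 v2 + ?F v2 v1 = 0"
      using e2 unfolding split d2 P by simp
    have "gr_mult (gr_add v1 v2) (gr_star (gr_add v1 v2)) h = ?F v1 v1 + ?F v2 v2 + (?F v1 v2 + ?F v2 v1)"
      unfolding gr_mult_def gr_add_def gr_star_def
      by (simp add: algebra_simps sum.distrib)
    also have "\<dots> = - (if h = 0 then 1 else 0)" using E1 E2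
      by (simp add: eq_neg_iff_add_eq_0 algebra_simps)
    also have "\<dots> = gr_one h" unfolding gr_one_def neg ..
    finally show "gr_mult (gr_add v1 v2) (gr_star (gr_add v1 v2)) h = gr_one h" .
  qed
qed

end
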